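(* Let $\mathcal{R}$ be a fusion ring with basis $\{x_1=1,\ldots,x_m\}$ and fusion matrices $M_j$, and for $n\ge1$ let $T_n=\sum_{i=1}^m\|M_i\|^2\big(M_i/\|M_i\|\big)^{\otimes n}$. If $n\ge2$ and $T_n\geq0$, then $T_{n-1}\geq 0$.
   Context: A fusion ring is a ring $\mathcal{R}$ which is a free $\mathbb{Z}$-module with a finite basis $\{x_1=1,\ldots,x_m\}$ such that $x_ix_j=\sum_k N_{ij}^k x_k$ with $N_{ij}^k\in\mathbb{N}$; there is an involution $i\mapsto i^*$ whose $\mathbb{Z}$-linear extension is an anti-involution of $\mathcal{R}$; and the coefficient of $x_1$ in $x_ix_j$ equals $\delta_{i,j^*}$. The fusion matrix is $(M_j)_{k,i}=N_{ji}^k$, $\|M_j\|$ its operator norm on $\mathbb{C}^m$, $\otimes n$ the Kronecker power, and $A\ge0$ means positive semidefinite. *)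

theory Defs
  imports "HOL-Analysis.Analysis"
begin

text \<open>The distinguished element e is the basis element x_1 = 1, N i j k is the
  structure constant N_{ij}^k (coefficient of x_k in x_i x_j), and dual is the
  involution i \<mapsto> i^*.\<close>

definition fusion_ring :: "('b::finite \<Rightarrow> 'b \<Rightarrow> 'b \<Rightarrow> nat) \<Rightarrow> 'b \<Rightarrow> ('b \<Rightarrow> 'b) \<Rightarrow> bool" where
  "fusion_ring N e dual \<longleftrightarrow>
     (\<forall>i j l s. (\<Sum>k\<in>UNIV. N i j k * N k l s) = (\<Sum>k\<in>UNIV. N j l k * N i k s)) \<and>
     (\<forall>j k. N e j k = (if j = k then 1 else 0)) \<and>
     (\<forall>j k. N j e k = (if j = k then 1 else 0)) \<and>
     (\<forall>i. dual (dual i) = i) \<and>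
     (\<forall>i j k. N (dual j) (dual i) (dual k) = N i j k) \<and>
     (\<forall>i j. N i j e = (if i = dual j then 1 else 0))"

definition fusion_matrix :: "('b::finite \<Rightarrow> 'b \<Rightarrow> 'b \<Rightarrow> nat) \<Rightarrow> 'b \<Rightarrow> complex^'b^'b" where
  "fusion_matrix N j = (\<chi> k i. of_nat (N j i k))"

definition mat_opnorm :: "complex^'b^'b \<Rightarrow> real" where
  "mat_opnorm A = onorm (\<lambda>v. A *v v)"

text \<open>Kronecker power A^{\<otimes>n}, with rows/columns indexed by multi-indices
  (lists of length n over the basis).\<close>
definition kron_pow :: "complex^'b^'b \<Rightarrow> nat \<Rightarrow> 'b list \<Rightarrow> 'b list \<Rightarrow> complex" where
  "kron_pow A n u v = (\<Prod>t<n. A $ (u ! t) $ (v ! t))"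

definition T_mat :: "('b::finite \<Rightarrow> 'b \<Rightarrow> 'b \<Rightarrow> nat) \<Rightarrow> nat \<Rightarrow> 'b list \<Rightarrow> 'b list \<Rightarrow> complex" where
  "T_mat N n u v = (\<Sum>i\<in>UNIV.
      complex_of_real ((mat_opnorm (fusion_matrix N i))\<^sup>2) *
      kron_pow (\<chi> a b. fusion_matrix N i $ a $ b / complex_of_real (mat_opnorm (fusion_matrix N i))) n u v)"

definition psd_on :: "'i set \<Rightarrow> ('i \<Rightarrow> 'i \<Rightarrow> complex) \<Rightarrow> bool" where
  "psd_on I A \<longleftrightarrow> (\<forall>u\<in>I. \<forall>v\<in>I. A v u = cnj (A u v)) \<and>
     (\<forall>x. Im (\<Sum>u\<in>I. \<Sum>v\<in>I. cnj (x u) * A u v * x v) = 0 \<and>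
          Re (\<Sum>u\<in>I. \<Sum>v\<in>I. cnj (x u) * A u v * x v) \<ge> 0)"

end

theory Submission
  imports Defs
begin

locale fr =
  fixes N :: "'b::finite \<Rightarrow> 'b \<Rightarrow> 'b \<Rightarrow> nat" and e :: 'b and dual :: "'b \<Rightarrow> 'b"
  assumes F: "fusion_ring N e dual"
begin

lemma assoc: "(\<Sum>k\<in>UNIV. N i j k * N k l s) = (\<Sum>k\<in>UNIV. N j l k * N i k s)"
  using F unfolding fusion_ring_def by blast
lemma unitL: "N e j k = (if j = k then 1 else 0)" using F unfolding fusion_ring_def by blast
lemma unitR: "N j e k = (if j = k then 1 else 0)" using F unfolding fusion_ring_def by blast
lemma dd[simp]: "dual (dual i) = i" using F unfolding fusion_ring_def by blast
lemma Ndual: "N (dual j) (dual i) (dual k) = N i j k" using F unfolding fusion_ring_def by blast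
lemma Ne: "N i j e = (if i = dual j then 1 else 0)" using F unfolding fusion_ring_def by blast

lemma dual_inj: "dual a = dual b \<longleftrightarrow> a = b" by (metis dd)

lemma recip: "N a b c = N (dual c) a (dual b)"
proof -
  have "(\<Sum>k\<in>UNIV. N (dual c) a k * N k b e) = (\<Sum>k\<in>UNIV. N a b k * N (dual c) k e)"
    by (rule assoc)
  moreover have "(\<Sum>k\<in>UNIV. N (dual c) a k * N k b e) = N (dual c) a (dual b)"
    by (simp add: Ne if_distrib cong: if_cong)
  moreover have "(\<Sum>k\<in>UNIV. N a b k * N (dual c) k e) = N a b c"
    by (simp add: Ne dual_inj if_distrib cong: if_cong)
  ultimately show ?thesis by simp
qed

lemma L3: "N (dual j) i k = N j k i"
  by (metis Ndual recip)

lemma posB: "\<exists>j. N i j k > 0"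
proof -
  have "(\<Sum>l\<in>UNIV. N (dual i) k l * N l (dual k) (dual i)) = (\<Sum>l\<in>UNIV. N k (dual k) l * N (dual i) l (dual i))"
    by (rule assoc)
  moreover have "(\<Sum>l\<in>UNIV. N k (dual k) l * N (dual i) l (dual i)) \<ge> N k (dual k) e * N (dual i) e (dual i)"
    by (rule member_le_sum) auto
  moreover have "N k (dual k) e * N (dual i) e (dual i) = 1" by (simp add: Ne unitR)
  ultimately have "(\<Sum>l\<in>UNIV. N (dual i) k l * N l (dual k) (dual i)) \<noteq> 0" by linarith
  then obtain l where "N l (dual k) (dual i) \<noteq> 0" by (metis (no_types, lifting) mult_0_right sum.neutral)
  moreover have "N l (dual k) (dual i) = N i l k" by (metis recip dd)
  ultimately show ?thesis by auto
qed

end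

context fr begin

definition Bm :: "real^'b^'b" where "Bm = (\<chi> k i. \<Sum>j\<in>UNIV. real (N i j k))"
definition Lr :: "'b \<Rightarrow> real^'b^'b" where "Lr j = (\<chi> k i. real (N j i k))"

lemma Bm_ge1: "Bm $ k $ i \<ge> 1"
proof -
  obtain j where "N i j k > 0" using posB by blast
  hence "real (N i j k) \<le> (\<Sum>j\<in>UNIV. real (N i j k))" by (intro member_le_sum) auto
  with \<open>N i j k > 0\<close> show ?thesis unfolding Bm_def by simp
qed

lemma comm_nat: "(\<Sum>l\<in>UNIV. N j l k * (\<Sum>s\<in>UNIV. N i s l)) = (\<Sum>l\<in>UNIV. (\<Sum>s\<in>UNIV. N l s k) * N j i l)"
proof -
  have "(\<Sum>l\<in>UNIV. N j l k * (\<Sum>s\<in>UNIV. N i s l)) = (\<Sum>l\<in>UNIV. \<Sum>s\<in>UNIV. N i s l * N j l k)"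
    by (simp add: sum_distrib_left mult.commute)
  also have "\<dots> = (\<Sum>s\<in>UNIV. \<Sum>l\<in>UNIV. N i s l * N j l k)"
    by (rule sum.swap)
  also have "\<dots> = (\<Sum>s\<in>UNIV. \<Sum>l\<in>UNIV. N j i l * N l s k)"
    using assoc[of j i _ k] by simp
  also have "\<dots> = (\<Sum>l\<in>UNIV. \<Sum>s\<in>UNIV. N j i l * N l s k)"
    by (rule sum.swap)
  also have "\<dots> = (\<Sum>l\<in>UNIV. (\<Sum>s\<in>UNIV. N l s k) * N j i l)"
    by (simp add: sum_distrib_left sum_distrib_right mult.commute)
  finally show ?thesis .
qed

lemma comm: "Lr j ** Bm = Bm ** Lr j"
proof -
  have "(Lr j ** Bm) $ k $ i = (Bm ** Lr j) $ k $ i" for k i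
  proof -
    have "(Lr j ** Bm) $ k $ i = real (\<Sum>l\<in>UNIV. N j l k * (\<Sum>s\<in>UNIV. N i s l))"
      by (simp add: matrix_matrix_mult_def Lr_def Bm_def)
    also have "\<dots> = real (\<Sum>l\<in>UNIV. (\<Sum>s\<in>UNIV. N l s k) * N j i l)" by (simp only: comm_nat)
    also have "\<dots> = (Bm ** Lr j) $ k $ i"
      by (simp add: matrix_matrix_mult_def Lr_def Bm_def)
    finally show ?thesis .
  qed
  then show ?thesis by (simp add: vec_eq_iff)
qed

definition Sx :: "(real^'b) set" where "Sx = {v. (\<forall>i. 0 \<le> v$i) \<and> sum (\<lambda>i. v$i) UNIV = 1}"

lemma Bv_ge: assumes "v \<in> Sx" shows "(Bm *v v) $ k \<ge> 1"
proof -
  have "(Bm *v v) $ k = (\<Sum>i\<in>UNIV. Bm$k$i * v$i)" by (simp add: matrix_vector_mult_def)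
  also have "\<dots> \<ge> (\<Sum>i\<in>UNIV. v$i)"
  proof (intro sum_mono)
    fix i have "0 \<le> v$i" using assms unfolding Sx_def by simp
    thus "v$i \<le> Bm$k$i * v$i" using mult_right_mono[OF Bm_ge1[of k i], of "v$i"] by simp
  qed
  finally show ?thesis using assms unfolding Sx_def by simp
qed

lemma PF_exists: "\<exists>d r. (\<forall>k. d$k > 0) \<and> r > 0 \<and> Bm *v d = r *\<^sub>R d"
proof -
  define f where "f v = (1 / sum (\<lambda>k. (Bm *v v)$k) UNIV) *\<^sub>R (Bm *v v)" for v :: "real^'b"
  have cl: "closed Sx" unfolding Sx_def
    by (intro closed_Collect_conj closed_Collect_all closed_Collect_le closed_Collect_eq continuous_intros)
  have bd: "bounded Sx"
  proof -
    have "norm v \<le> 1" if "v \<in> Sx" for v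
      using norm_le_l1_cart[of v] that unfolding Sx_def by simp
    thus ?thesis unfolding bounded_iff by blast
  qed
  have cv: "convex Sx" unfolding convex_def
  proof (intro ballI allI impI)
    fix x y :: "real^'b" and u v :: real
    assume x: "x \<in> Sx" and y: "y \<in> Sx" and uv: "0 \<le> u" "0 \<le> v" "u + v = 1"
    have "0 \<le> (u *\<^sub>R x + v *\<^sub>R y)$i" for i using x y uv unfolding Sx_def by simp
    moreover have "sum (\<lambda>i. (u *\<^sub>R x + v *\<^sub>R y)$i) UNIV = 1"
      using x y uv unfolding Sx_def by (simp add: sum.distrib sum_distrib_left[symmetric])
    ultimately show "u *\<^sub>R x + v *\<^sub>R y \<in> Sx" unfolding Sx_def by simp
  qed
  have ne: "Sx \<noteq> {}"
  proof -
    obtain a :: 'b where True by simp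
    have "((\<chi> i. if i = a then 1 else 0) :: real^'b) \<in> Sx" unfolding Sx_def by simp
    thus ?thesis by blast
  qed
  have pos: "sum (\<lambda>k. (Bm *v v)$k) UNIV > 0" if "v \<in> Sx" for v
    using Bv_ge[OF that] by (intro sum_pos) (auto intro: less_le_trans[of 0 1])
  have ct: "continuous_on Sx f" unfolding f_def
    using pos by (intro continuous_intros) (metis less_irrefl)
  have im: "f \<in> Sx \<rightarrow> Sx"
  proof
    fix v assume v: "v \<in> Sx"
    have "0 \<le> (Bm *v v)$i" for i using Bv_ge[OF v, of i] by simp
    moreover have "sum (\<lambda>i. f v $ i) UNIV = 1" unfolding f_def using pos[OF v]
      by (simp add: sum_divide_distrib[symmetric])
    ultimately show "f v \<in> Sx" unfolding Sx_def f_def using pos[OF v] by simp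
  qed
  have cp: "compact Sx" using cl bd compact_eq_bounded_closed by blast
  obtain d where d: "d \<in> Sx" "f d = d" using brouwer[OF cp cv ne ct im] by blast
  define r where "r = sum (\<lambda>k. (Bm *v d)$k) UNIV"
  have r: "r > 0" using pos[OF d(1)] r_def by simp
  have eq: "(1/r) *\<^sub>R (Bm *v d) = d" using d(2) unfolding f_def r_def by simp
  hence "r *\<^sub>R ((1/r) *\<^sub>R (Bm *v d)) = r *\<^sub>R d" by simp
  hence "Bm *v d = r *\<^sub>R d" using r by simp
  moreover have "d$k > 0" for k
  proof -
    have "d$k = ((1/r) *\<^sub>R (Bm *v d))$k" using eq by simp
    hence "d$k = (1/r) * (Bm *v d)$k" by simp
    thus ?thesis using Bv_ge[OF d(1), of k] r by simp
  qed
  ultimately show ?thesis using r by blast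
qed

end

context fr begin

lemma PF_unique:
  assumes dpos: "\<And>k. d$k > 0" and Bd: "Bm *v d = r *\<^sub>R d" and Bv: "Bm *v v = r *\<^sub>R v"
  shows "\<exists>t. v = t *\<^sub>R d"
proof -
  define t where "t = Min ((\<lambda>k. v$k / d$k) ` UNIV)"
  obtain k0 where k0: "t = v$k0 / d$k0"
  proof -
    have "t \<in> (\<lambda>k. v$k / d$k) ` UNIV" unfolding t_def by (intro Min_in) auto
    thus ?thesis using that by blast
  qed
  define z where "z = v - t *\<^sub>R d"
  have zge: "z$k \<ge> 0" for k
  proof -
    have "t \<le> v$k / d$k" unfolding t_def by (intro Min_le) auto
    hence "t * d$k \<le> v$k" using dpos[of k] by (simp add: le_divide_eq)
    thus ?thesis unfolding z_def by simp
  qed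
  have z0: "z$k0 = 0" unfolding z_def using k0 dpos[of k0] by simp
  have Bz: "Bm *v z = r *\<^sub>R z" unfolding z_def
    by (simp add: matrix_vector_mult_diff_distrib matrix_vector_mult_scaleR Bd Bv algebra_simps)
  have "(\<Sum>i\<in>UNIV. Bm$k0$i * z$i) = 0"
  proof -
    have "(Bm *v z)$k0 = 0" using Bz z0 by simp
    thus ?thesis by (simp add: matrix_vector_mult_def)
  qed
  moreover have "\<forall>i\<in>UNIV. 0 \<le> Bm$k0$i * z$i" using zge Bm_ge1 by (meson dual_order.trans mult_nonneg_nonneg zero_le_one)
  ultimately have "\<forall>i\<in>UNIV. Bm$k0$i * z$i = 0" by (simp add: sum_nonneg_eq_0_iff)
  hence "z$i = 0" for i using Bm_ge1[of k0 i] by (metis UNIV_I mult_eq_0_iff not_one_le_zero)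
  hence "z = 0" by (simp add: vec_eq_iff)
  thus ?thesis unfolding z_def by auto
qed

lemma eigen_exists: "\<exists>d lam. (\<forall>k. d$k > 0) \<and> norm d = 1 \<and> (\<forall>j. Lr j *v d = lam j *\<^sub>R d)
   \<and> (\<forall>j. lam j > 0) \<and> (\<forall>j. lam (dual j) = lam j)"
proof -
  obtain d0 r where d0: "\<And>k. d0$k > 0" and r: "r > 0" and Bd0: "Bm *v d0 = r *\<^sub>R d0"
    using PF_exists by blast
  have "d0 \<noteq> 0" using d0 by (metis less_irrefl zero_index)
  hence nd0: "norm d0 > 0" by simp
  define d where "d = (1 / norm d0) *\<^sub>R d0"
  have dpos: "d$k > 0" for k using d0[of k] nd0 unfolding d_def by simp
  have nd: "norm d = 1" unfolding d_def using nd0 by simp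
  have Bd: "Bm *v d = r *\<^sub>R d" unfolding d_def by (simp add: matrix_vector_mult_scaleR Bd0)
  have "\<exists>t. Lr j *v d = t *\<^sub>R d" for j
  proof (rule PF_unique[OF dpos Bd])
    have "Bm *v (Lr j *v d) = (Bm ** Lr j) *v d" by (simp add: matrix_vector_mul_assoc)
    also have "\<dots> = (Lr j ** Bm) *v d" by (simp add: comm)
    also have "\<dots> = r *\<^sub>R (Lr j *v d)" by (simp add: matrix_vector_mul_assoc[symmetric] Bd matrix_vector_mult_scaleR)
    finally show "Bm *v (Lr j *v d) = r *\<^sub>R (Lr j *v d)" .
  qed
  then obtain lam where lam: "\<And>j. Lr j *v d = lam j *\<^sub>R d" by metis
  have Lrc: "(Lr j *v d)$k = (\<Sum>i\<in>UNIV. real (N j i k) * d$i)" for j k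
    by (simp add: matrix_vector_mult_def Lr_def)
  have lpos: "lam j > 0" for j
  proof -
    have "lam j * d$j = (\<Sum>i\<in>UNIV. real (N j i j) * d$i)" using Lrc[of j j] lam[of j] by simp
    also have "\<dots> \<ge> real (N j e j) * d$e"
    proof (rule member_le_sum)
      fix x show "0 \<le> real (N j x j) * d$x" using dpos[of x] by simp
    qed auto
    also have "real (N j e j) * d$e = d$e" by (simp add: unitR)
    finally have "lam j * d$j > 0" using dpos[of e] by linarith
    thus ?thesis using dpos[of j] by (simp add: zero_less_mult_iff)
  qed
  have ss: "(\<Sum>k\<in>UNIV. d$k * d$k) > 0"
    using dpos by (intro sum_pos) auto
  have ldual: "lam (dual j) = lam j" for j
  proof -
    have "lam j * (\<Sum>k\<in>UNIV. d$k * d$k) = (\<Sum>k\<in>UNIV. d$k * (Lr j *v d)$k)"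
      using lam[of j] by (simp add: sum_distrib_left algebra_simps)
    also have "\<dots> = (\<Sum>k\<in>UNIV. \<Sum>i\<in>UNIV. d$k * real (N j i k) * d$i)"
      by (simp add: Lrc sum_distrib_left algebra_simps)
    also have "\<dots> = (\<Sum>i\<in>UNIV. \<Sum>k\<in>UNIV. d$k * real (N j i k) * d$i)"
      by (rule sum.swap)
    also have "\<dots> = (\<Sum>i\<in>UNIV. d$i * (Lr (dual j) *v d)$i)"
      by (simp add: Lrc sum_distrib_left algebra_simps L3)
    also have "\<dots> = lam (dual j) * (\<Sum>k\<in>UNIV. d$k * d$k)"
      using lam[of "dual j"] by (simp add: sum_distrib_left algebra_simps)
    finally show ?thesis using ss by simp
  qed
  show ?thesis using dpos nd lam lpos ldual by blast
qed

end

context fr begin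

lemma norm_sq_vec: "(norm (v :: 'a::real_normed_vector^'b))\<^sup>2 = (\<Sum>k\<in>UNIV. (norm (v$k))\<^sup>2)"
  unfolding norm_vec_def L2_set_def by (simp add: sum_nonneg)

lemma schur:
  assumes dpos: "\<And>k. d$k > 0" and lam: "\<And>j. Lr j *v d = lam j *\<^sub>R d"
    and lpos: "\<And>j. lam j > 0" and ldual: "\<And>j. lam (dual j) = lam j"
    and ypos: "\<And>i. y$i \<ge> 0"
  shows "norm (Lr j *v y) \<le> lam j * norm y"
proof -
  define A where "A k i = real (N j i k)" for k i
  have Lrc: "(Lr j' *v v)$k = (\<Sum>i\<in>UNIV. real (N j' i k) * v$i)" for j' v k
    by (simp add: matrix_vector_mult_def Lr_def)
  have rowd: "(\<Sum>i\<in>UNIV. A k i * d$i) = lam j * d$k" for k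
    using Lrc[of j d k] lam[of j] unfolding A_def by simp
  have cold: "(\<Sum>k\<in>UNIV. A k i * d$k) = lam j * d$i" for i
  proof -
    have "(\<Sum>k\<in>UNIV. A k i * d$k) = (Lr (dual j) *v d)$i"
      unfolding Lrc A_def by (simp add: L3)
    thus ?thesis using lam[of "dual j"] ldual[of j] by simp
  qed
  have row: "((Lr j *v y)$k)\<^sup>2 \<le> lam j * d$k * (\<Sum>i\<in>UNIV. A k i * (y$i)\<^sup>2 / d$i)" for k
  proof -
    have "(Lr j *v y)$k = (\<Sum>i\<in>UNIV. sqrt (A k i * d$i) * (sqrt (A k i / d$i) * y$i))"
    proof -
      have "sqrt (A k i * d$i) * (sqrt (A k i / d$i) * y$i) = A k i * y$i" for i
      proof -
        have "sqrt (A k i * d$i) * sqrt (A k i / d$i) = sqrt (A k i * d$i * (A k i / d$i))"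
          by (rule real_sqrt_mult[symmetric])
        also have "A k i * d$i * (A k i / d$i) = (A k i)\<^sup>2" using dpos[of i] by (simp add: power2_eq_square)
        also have "sqrt ((A k i)\<^sup>2) = A k i" unfolding A_def by simp
        finally have h: "sqrt (A k i * d$i) * sqrt (A k i / d$i) = A k i" .
        show ?thesis by (metis h mult.assoc)
      qed
      hence "(\<Sum>i\<in>UNIV. sqrt (A k i * d$i) * (sqrt (A k i / d$i) * y$i)) = (\<Sum>i\<in>UNIV. A k i * y$i)"
        by (intro sum.cong) auto
      thus ?thesis unfolding Lrc A_def by simp
    qed
    moreover have "(\<Sum>i\<in>UNIV. sqrt (A k i * d$i) * (sqrt (A k i / d$i) * y$i))\<^sup>2 \<le> (\<Sum>i\<in>UNIV. (sqrt (A k i * d$i))\<^sup>2) * (\<Sum>i\<in>UNIV. (sqrt (A k i / d$i) * y$i)\<^sup>2)"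
      by (rule Cauchy_Schwarz_ineq_sum)
    ultimately have "((Lr j *v y)$k)\<^sup>2 \<le> (\<Sum>i\<in>UNIV. (sqrt (A k i * d$i))\<^sup>2) * (\<Sum>i\<in>UNIV. (sqrt (A k i / d$i) * y$i)\<^sup>2)"
      by simp
    also have "(\<Sum>i\<in>UNIV. (sqrt (A k i * d$i))\<^sup>2) = (\<Sum>i\<in>UNIV. A k i * d$i)"
      using dpos unfolding A_def by (intro sum.cong) (auto simp: less_imp_le)
    also have "(\<Sum>i\<in>UNIV. (sqrt (A k i / d$i) * y$i)\<^sup>2) = (\<Sum>i\<in>UNIV. A k i * (y$i)\<^sup>2 / d$i)"
      using dpos unfolding A_def by (intro sum.cong) (auto simp: less_imp_le power_mult_distrib)
    finally show ?thesis using rowd[of k] by simp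
  qed
  have "(norm (Lr j *v y))\<^sup>2 = (\<Sum>k\<in>UNIV. ((Lr j *v y)$k)\<^sup>2)" by (simp add: norm_sq_vec)
  also have "\<dots> \<le> (\<Sum>k\<in>UNIV. lam j * d$k * (\<Sum>i\<in>UNIV. A k i * (y$i)\<^sup>2 / d$i))"
    by (intro sum_mono row)
  also have "\<dots> = lam j * (\<Sum>k\<in>UNIV. \<Sum>i\<in>UNIV. (y$i)\<^sup>2 / d$i * (A k i * d$k))"
    by (simp add: sum_distrib_left mult_ac)
  also have "\<dots> = lam j * (\<Sum>i\<in>UNIV. \<Sum>k\<in>UNIV. (y$i)\<^sup>2 / d$i * (A k i * d$k))"
    by (rule arg_cong[where f="\<lambda>x. lam j * x"], rule sum.swap)
  also have "\<dots> = lam j * (\<Sum>i\<in>UNIV. (y$i)\<^sup>2 / d$i * (\<Sum>k\<in>UNIV. A k i * d$k))"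
    by (simp only: sum_distrib_left)
  also have "\<dots> = lam j * (\<Sum>i\<in>UNIV. lam j * (y$i)\<^sup>2)"
    using dpos by (simp add: cold less_imp_neq[symmetric] mult.commute)
  also have "\<dots> = (lam j)\<^sup>2 * (norm y)\<^sup>2"
  proof -
    have ny: "(norm y)\<^sup>2 = (\<Sum>i\<in>UNIV. (y$i)\<^sup>2)" using norm_sq_vec[of y] by simp
    have "lam j * (\<Sum>i\<in>UNIV. lam j * (y$i)\<^sup>2) = lam j * (lam j * (\<Sum>i\<in>UNIV. (y$i)\<^sup>2))"
      by (simp only: sum_distrib_left)
    also have "\<dots> = (lam j)\<^sup>2 * (norm y)\<^sup>2" by (subst ny) (simp add: power2_eq_square)
    finally show ?thesis .
  qed
  also have "\<dots> = (lam j * norm y)\<^sup>2" by (simp add: power_mult_distrib)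
  finally have fin: "(norm (Lr j *v y))\<^sup>2 \<le> (lam j * norm y)\<^sup>2" .
  show ?thesis using power2_le_imp_le[OF fin] lpos[of j] by simp
qed

end

context fr begin

lemma opnorm_eq:
  assumes dpos: "\<And>k. d$k > 0" and nd: "norm d = 1" and lam: "\<And>j. Lr j *v d = lam j *\<^sub>R d"
    and lpos: "\<And>j. lam j > 0" and ldual: "\<And>j. lam (dual j) = lam j"
  shows "mat_opnorm (fusion_matrix N j) = lam j"
proof -
  let ?M = "fusion_matrix N j"
  have Mc: "(?M *v x)$k = (\<Sum>i\<in>UNIV. of_nat (N j i k) * x$i)" for x k
    by (simp add: matrix_vector_mult_def fusion_matrix_def)
  have Lrc: "(Lr j' *v v)$k = (\<Sum>i\<in>UNIV. real (N j' i k) * v$i)" for j' v k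
    by (simp add: matrix_vector_mult_def Lr_def)
  define dc :: "complex^'b" where "dc = (\<chi> k. complex_of_real (d$k))"
  have ndc: "norm dc = 1" using nd unfolding dc_def norm_vec_def by simp
  have Mdc: "?M *v dc = (\<chi> k. complex_of_real (lam j * d$k))"
  proof -
    have "(?M *v dc)$k = complex_of_real (lam j * d$k)" for k
    proof -
      have "(?M *v dc)$k = complex_of_real (\<Sum>i\<in>UNIV. real (N j i k) * d$i)"
        unfolding Mc dc_def by simp
      also have "(\<Sum>i\<in>UNIV. real (N j i k) * d$i) = lam j * d$k"
        using Lrc[of j d k] lam[of j] by simp
      finally show ?thesis .
    qed
    thus ?thesis by (simp add: vec_eq_iff)
  qed
  have nMdc: "norm (?M *v dc) = lam j"
  proof -
    have "norm (?M *v dc) = norm (lam j *\<^sub>R d)"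
      unfolding Mdc norm_vec_def by (simp del: of_real_mult)
    thus ?thesis using nd lpos[of j] by simp
  qed
  have bl: "bounded_linear (\<lambda>v. ?M *v v)" by simp
  have lo: "lam j \<le> mat_opnorm ?M"
    using le_onorm[OF bl, of dc] nMdc ndc unfolding mat_opnorm_def by simp
  have up: "mat_opnorm ?M \<le> lam j"
    unfolding mat_opnorm_def
  proof (rule onorm_le)
    fix x :: "complex^'b"
    define y :: "real^'b" where "y = (\<chi> i. cmod (x$i))"
    have ny: "norm y = norm x" unfolding y_def norm_vec_def by simp
    have "norm (?M *v x) \<le> norm (Lr j *v y)"
    proof (rule norm_le_componentwise_cart)
      fix k
      have "norm ((?M *v x)$k) \<le> (\<Sum>i\<in>UNIV. norm (of_nat (N j i k) * x$i))"
        unfolding Mc by (rule norm_sum)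
      also have "\<dots> = (Lr j *v y)$k" unfolding Lrc y_def by (simp add: norm_mult)
      also have "\<dots> \<le> norm ((Lr j *v y)$k)" by simp
      finally show "norm ((?M *v x)$k) \<le> norm ((Lr j *v y)$k)" .
    qed
    also have "\<dots> \<le> lam j * norm y"
      by (rule schur[OF dpos lam lpos ldual]) (simp add: y_def)
    finally show "norm (?M *v x) \<le> lam j * norm x" using ny by simp
  qed
  show ?thesis using lo up by simp
qed

end

lemma kron_snoc:
  assumes "length u = m" "length v = m"
  shows "kron_pow K (Suc m) (u@[a]) (v@[b]) = kron_pow K m u v * K$a$b"
proof -
  have "kron_pow K (Suc m) (u@[a]) (v@[b]) = (\<Prod>t<m. K $ ((u@[a]) ! t) $ ((v@[b]) ! t)) * K$a$b"
    unfolding kron_pow_def using assms by (simp add: nth_append)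
  also have "(\<Prod>t<m. K $ ((u@[a]) ! t) $ ((v@[b]) ! t)) = kron_pow K m u v"
    unfolding kron_pow_def using assms by (intro prod.cong) (auto simp: nth_append)
  finally show ?thesis .
qed

context fr begin

lemma inner_one:
  assumes nd: "norm d = 1" and lam: "\<And>j. Lr j *v d = lam j *\<^sub>R d" and lpos: "lam i > 0"
  shows "(\<Sum>a\<in>UNIV. \<Sum>b\<in>UNIV. complex_of_real (d$a) * (of_nat (N i b a) / complex_of_real (lam i)) * complex_of_real (d$b)) = 1"
proof -
  have Lrc: "(Lr j' *v v)$k = (\<Sum>i\<in>UNIV. real (N j' i k) * v$i)" for j' v k
    by (simp add: matrix_vector_mult_def Lr_def)
  have row: "(\<Sum>b\<in>UNIV. real (N i b a) * d$b) = lam i * d$a" for a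
    using Lrc[of i d a] lam[of i] by simp
  have "(\<Sum>a\<in>UNIV. \<Sum>b\<in>UNIV. complex_of_real (d$a) * (of_nat (N i b a) / complex_of_real (lam i)) * complex_of_real (d$b))
      = (\<Sum>a\<in>UNIV. complex_of_real (d$a / lam i * (\<Sum>b\<in>UNIV. real (N i b a) * d$b)))"
    by (simp add: sum_distrib_left mult_ac)
  also have "\<dots> = (\<Sum>a\<in>UNIV. complex_of_real ((d$a)\<^sup>2))"
    using lpos by (simp add: row power2_eq_square)
  also have "\<dots> = complex_of_real ((norm d)\<^sup>2)"
    by (simp add: norm_sq_vec)
  finally show ?thesis using nd by simp
qed

end

context fr begin

lemma contract:
  assumes nd: "norm d = 1" and lam: "\<And>j. Lr j *v d = lam j *\<^sub>R d" and lpos: "\<And>j. lam j > 0"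
    and cj: "\<And>j. mat_opnorm (fusion_matrix N j) = lam j"
    and u: "length u = m" and v: "length v = m"
  shows "(\<Sum>a\<in>UNIV. \<Sum>b\<in>UNIV. complex_of_real (d$a) * T_mat N (Suc m) (u@[a]) (v@[b]) * complex_of_real (d$b))
       = T_mat N m u v"
proof -
  define K where "K i = (\<chi> a b. fusion_matrix N i $ a $ b / complex_of_real (lam i))" for i
  have T: "T_mat N k u' v' = (\<Sum>i\<in>UNIV. complex_of_real ((lam i)\<^sup>2) * kron_pow (K i) k u' v')" for k u' v'
    unfolding T_mat_def K_def cj ..
  have Kab: "K i $ a $ b = of_nat (N i b a) / complex_of_real (lam i)" for i a b
    unfolding K_def fusion_matrix_def by simp
  have "(\<Sum>a\<in>UNIV. \<Sum>b\<in>UNIV. complex_of_real (d$a) * T_mat N (Suc m) (u@[a]) (v@[b]) * complex_of_real (d$b))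
     = (\<Sum>a\<in>UNIV. \<Sum>b\<in>UNIV. \<Sum>i\<in>UNIV. complex_of_real ((lam i)\<^sup>2) * kron_pow (K i) m u v *
           (complex_of_real (d$a) * (K i $ a $ b) * complex_of_real (d$b)))"
    unfolding T kron_snoc[OF u v] by (simp add: sum_distrib_left sum_distrib_right mult_ac)
  also have "\<dots> = (\<Sum>a\<in>UNIV. \<Sum>i\<in>UNIV. \<Sum>b\<in>UNIV. complex_of_real ((lam i)\<^sup>2) * kron_pow (K i) m u v *
           (complex_of_real (d$a) * (K i $ a $ b) * complex_of_real (d$b)))"
    by (intro sum.cong refl sum.swap)
  also have "\<dots> = (\<Sum>i\<in>UNIV. \<Sum>a\<in>UNIV. \<Sum>b\<in>UNIV. complex_of_real ((lam i)\<^sup>2) * kron_pow (K i) m u v *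
           (complex_of_real (d$a) * (K i $ a $ b) * complex_of_real (d$b)))"
    by (rule sum.swap)
  also have "\<dots> = (\<Sum>i\<in>UNIV. complex_of_real ((lam i)\<^sup>2) * kron_pow (K i) m u v *
           (\<Sum>a\<in>UNIV. \<Sum>b\<in>UNIV. complex_of_real (d$a) * (K i $ a $ b) * complex_of_real (d$b)))"
    by (simp only: sum_distrib_left)
  also have "\<dots> = (\<Sum>i\<in>UNIV. complex_of_real ((lam i)\<^sup>2) * kron_pow (K i) m u v)"
    using inner_one[OF nd lam lpos] by (simp add: Kab)
  also have "\<dots> = T_mat N m u v" by (simp add: T)
  finally show ?thesis .
qed

lemma herm:
  assumes lpos: "\<And>j. lam j > 0" and ldual: "\<And>j. lam (dual j) = lam j"
    and cj: "\<And>j. mat_opnorm (fusion_matrix N j) = lam j"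
  shows "T_mat N m v u = cnj (T_mat N m u v)"
proof -
  define K where "K i = (\<chi> a b. fusion_matrix N i $ a $ b / complex_of_real (lam i))" for i
  have T: "T_mat N k u' v' = (\<Sum>i\<in>UNIV. complex_of_real ((lam i)\<^sup>2) * kron_pow (K i) k u' v')" for k u' v'
    unfolding T_mat_def K_def cj ..
  have Kab: "K i $ a $ b = of_nat (N i b a) / complex_of_real (lam i)" for i a b
    unfolding K_def fusion_matrix_def by simp
  have real: "cnj (T_mat N m u v) = T_mat N m u v"
    unfolding T kron_pow_def Kab by simp
  have inj: "inj dual" by (metis dd injI)
  have sur: "dual ` UNIV = UNIV" by (metis dd surjI surj_def)
  have "T_mat N m v u = (\<Sum>i\<in>UNIV. complex_of_real ((lam (dual i))\<^sup>2) * kron_pow (K (dual i)) m v u)"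
  proof -
    have ri: "(\<Sum>i\<in>UNIV. f (dual i)) = (\<Sum>i\<in>UNIV. f i)" for f :: "'b \<Rightarrow> complex"
      using sum.reindex[OF inj, of f] sur by (simp add: comp_def)
    show ?thesis unfolding T by (rule ri[symmetric])
  qed
  also have "\<dots> = T_mat N m u v"
    unfolding T kron_pow_def Kab ldual L3 ..
  finally show ?thesis using real by simp
qed

end

context fr begin

lemma sum_snoc: "(\<Sum>w\<in>{w. length w = Suc m}. h w) = (\<Sum>u\<in>{u. length u = m}. \<Sum>a\<in>UNIV. h (u@[a]))"
proof -
  let ?g = "\<lambda>(u, a). u @ [a]"
  have img: "{w. length w = Suc m} = ?g ` ({u. length u = m} \<times> UNIV)"
  proof (intro set_eqI iffI)
    fix w assume "w \<in> {w. length w = Suc m}"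
    hence "w \<noteq> []" "length (butlast w) = m" by auto
    hence "w = ?g (butlast w, last w)" by simp
    thus "w \<in> ?g ` ({u. length u = m} \<times> UNIV)" using \<open>length (butlast w) = m\<close> by blast
  qed auto
  have inj: "inj_on ?g ({u. length u = m} \<times> UNIV)" by (auto simp: inj_on_def)
  have "(\<Sum>w\<in>{w. length w = Suc m}. h w) = (\<Sum>p\<in>{u. length u = m} \<times> UNIV. h (?g p))"
    unfolding img by (subst sum.reindex[OF inj]) (auto simp: comp_def intro!: sum.cong split: prod.split)
  also have "\<dots> = (\<Sum>u\<in>{u. length u = m}. \<Sum>a\<in>UNIV. h (u@[a]))"
    unfolding sum.cartesian_product by (intro sum.cong refl) (auto split: prod.split)
  finally show ?thesis .
qed

lemma quad_eq:
  fixes x :: "'b list \<Rightarrow> complex"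
  assumes nd: "norm d = 1" and lam: "\<And>j. Lr j *v d = lam j *\<^sub>R d" and lpos: "\<And>j. lam j > 0"
    and cj: "\<And>j. mat_opnorm (fusion_matrix N j) = lam j"
  defines "y \<equiv> \<lambda>w. x (butlast w) * complex_of_real (d $ last w)"
  shows "(\<Sum>u\<in>{w. length w = Suc m}. \<Sum>v\<in>{w. length w = Suc m}. cnj (y u) * T_mat N (Suc m) u v * y v)
       = (\<Sum>u\<in>{w. length w = m}. \<Sum>v\<in>{w. length w = m}. cnj (x u) * T_mat N m u v * x v)"
proof -
  let ?L = "{w::'b list. length w = m}"
  have "(\<Sum>u\<in>{w. length w = Suc m}. \<Sum>v\<in>{w. length w = Suc m}. cnj (y u) * T_mat N (Suc m) u v * y v)
     = (\<Sum>u\<in>?L. \<Sum>a\<in>UNIV. \<Sum>v\<in>?L. \<Sum>b\<in>UNIV. cnj (x u * complex_of_real (d$a)) * T_mat N (Suc m) (u@[a]) (v@[b]) * (x v * complex_of_real (d$b)))"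
    unfolding sum_snoc y_def by simp
  also have "\<dots> = (\<Sum>u\<in>?L. \<Sum>v\<in>?L. \<Sum>a\<in>UNIV. \<Sum>b\<in>UNIV. cnj (x u * complex_of_real (d$a)) * T_mat N (Suc m) (u@[a]) (v@[b]) * (x v * complex_of_real (d$b)))"
    by (intro sum.cong refl sum.swap)
  also have "\<dots> = (\<Sum>u\<in>?L. \<Sum>v\<in>?L. cnj (x u) * (\<Sum>a\<in>UNIV. \<Sum>b\<in>UNIV. complex_of_real (d$a) * T_mat N (Suc m) (u@[a]) (v@[b]) * complex_of_real (d$b)) * x v)"
    by (intro sum.cong refl) (simp add: sum_distrib_left sum_distrib_right mult_ac)
  also have "\<dots> = (\<Sum>u\<in>?L. \<Sum>v\<in>?L. cnj (x u) * T_mat N m u v * x v)"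
    by (intro sum.cong refl) (simp add: contract[OF nd lam lpos cj])
  finally show ?thesis .
qed

end

theorem mainTheorem17:
  fixes N :: "'b::finite \<Rightarrow> 'b \<Rightarrow> 'b \<Rightarrow> nat" and e :: 'b and dual :: "'b \<Rightarrow> 'b" and n :: nat
  assumes "fusion_ring N e dual"
    and "n \<ge> 2"
    and "psd_on {u::'b list. length u = n} (T_mat N n)"
  shows "psd_on {u::'b list. length u = n - 1} (T_mat N (n - 1))"
proof -
  interpret fr N e dual by (rule fr.intro) (rule assms(1))
  obtain d lam where dpos: "\<And>k. d$k > 0" and nd: "norm d = 1" and lam: "\<And>j. Lr j *v d = lam j *\<^sub>R d"
    and lpos: "\<And>j. lam j > 0" and ldual: "\<And>j. lam (dual j) = lam j"
    using eigen_exists by blast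
  have cj: "\<And>j. mat_opnorm (fusion_matrix N j) = lam j"
    by (rule opnorm_eq[OF dpos nd lam lpos ldual])
  obtain m where n: "n = Suc m" using assms(2) by (cases n) auto
  have m: "n - 1 = m" using n by simp
  have P: "psd_on {u::'b list. length u = Suc m} (T_mat N (Suc m))" using assms(3) n by simp
  show ?thesis unfolding m psd_on_def
  proof (intro conjI ballI allI)
    fix u v show "T_mat N m v u = cnj (T_mat N m u v)" by (rule herm[OF lpos ldual cj])
  next
    fix x :: "'b list \<Rightarrow> complex"
    define y where "y = (\<lambda>w. x (butlast w) * complex_of_real (d $ last w))"
    have Q: "(\<Sum>u\<in>{w. length w = Suc m}. \<Sum>v\<in>{w. length w = Suc m}. cnj (y u) * T_mat N (Suc m) u v * y v)
       = (\<Sum>u\<in>{w. length w = m}. \<Sum>v\<in>{w. length w = m}. cnj (x u) * T_mat N m u v * x v)"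
      unfolding y_def by (rule quad_eq[OF nd lam lpos cj])
    from P have "Im (\<Sum>u\<in>{w. length w = Suc m}. \<Sum>v\<in>{w. length w = Suc m}. cnj (y u) * T_mat N (Suc m) u v * y v) = 0"
      "Re (\<Sum>u\<in>{w. length w = Suc m}. \<Sum>v\<in>{w. length w = Suc m}. cnj (y u) * T_mat N (Suc m) u v * y v) \<ge> 0"
      unfolding psd_on_def by blast+
    thus "Im (\<Sum>u\<in>{u. length u = m}. \<Sum>v\<in>{u. length u = m}. cnj (x u) * T_mat N m u v * x v) = 0"
      "0 \<le> Re (\<Sum>u\<in>{u. length u = m}. \<Sum>v\<in>{u. length u = m}. cnj (x u) * T_mat N m u v * x v)"
      unfolding Q by auto
  qed
qed

end
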